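(* Let $s>0$ and let $|FMSV\rangle$ be the four-mode state $$|FMSV\rangle=\frac{1}{\cosh s}\sum_{n=0}^\infty\sum_{r_1=0}^n\sum_{r_2=0}^n\sqrt{\binom{n}{r_1}}\sqrt{\binom{n}{r_2}}\Big(\tfrac12\tanh s\Big)^n|n-r_1\rangle_1|n-r_2\rangle_2|r_1\rangle_3|r_2\rangle_4,$$ where $|k\rangle_j$ is the $k$-photon Fock state of mode $j$. Let $\{j,j'\}$ be a pair of alternate modes, i.e. $\{j,j'\}=\{1,3\}$ or $\{j,j'\}=\{2,4\}$, and fix an integer $M\ge 0$. For nonnegative integers $m_j,m_{j'}$ with $m_j+m_{j'}=M$, let $|\psi^{sub}_{m_j,m_{j'}}\rangle$ be the normalized photon-subtracted state $a_j^{m_j}a_{j'}^{m_{j'}}|FMSV\rangle/\|a_j^{m_j}a_{j'}^{m_{j'}}|FMSV\rangle\|$ (no photons added to or subtracted from the other two modes), where $a_j$ is the annihilation operator of mode $j$. Then the generalized geometric measure $\mathcal G(|\psi^{sub}_{m_j,m_{j'}}\rangle)$ is independent of the split $(m_j,m_{j'})$, i.e. it depends only on $M$.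
   Context: The annihilation operator acts as $a|k\rangle=\sqrt{k}\,|k-1\rangle$ (so $a^m|k\rangle=\sqrt{k!/(k-m)!}\,|k-m\rangle$ for $k\ge m$ and $0$ otherwise). A four-mode pure state $|\chi\rangle$ is called non-genuinely multimode entangled if there is a bipartition of the modes $\{1,2,3,4\}=\mathcal A\cup\mathcal B$ into two disjoint nonempty sets with $|\chi\rangle=|\chi_{\mathcal A}\rangle\otimes|\chi_{\mathcal B}\rangle$; denote this set by $nG$. The generalized geometric measure (GGM) of a four-mode pure state is $\mathcal G(|\psi\rangle)=1-\sup_{|\chi\rangle\in nG}|\langle\chi|\psi\rangle|^2$. *)

theory Defs
  imports "HOL-Analysis.Analysis"
begin

text \<open>Four-mode pure states in the Fock basis: a state is its coefficient function on
occupation numbers (k1,k2,k3,k4), i.e. psi = sum_k psi(k) |k1>|k2>|k3>|k4>.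
Modes are numbered 1,2,3,4.\<close>

type_synonym idx4 = "nat \<times> nat \<times> nat \<times> nat"
type_synonym state4 = "idx4 \<Rightarrow> complex"

definition coord :: "nat \<Rightarrow> idx4 \<Rightarrow> nat" where
  "coord i k = (case k of (a, b, c, d) \<Rightarrow>
     (if i = 1 then a else if i = 2 then b else if i = 3 then c else d))"

definition bump :: "nat \<Rightarrow> nat \<Rightarrow> idx4 \<Rightarrow> idx4" where
  "bump i m k = (case k of (a, b, c, d) \<Rightarrow>
     (if i = 1 then (a + m, b, c, d) else if i = 2 then (a, b + m, c, d)
      else if i = 3 then (a, b, c + m, d) else (a, b, c, d + m)))"

definition ket4 :: "idx4 \<Rightarrow> state4" where
  "ket4 n = (\<lambda>k. if k = n then 1 else 0)"

text \<open>Annihilation operator of mode j, extended linearly from a|k> = sqrt k |k-1>: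
the coefficient of |k> in a_j psi is sqrt(k_j+1) times the coefficient of |k+e_j> in psi.\<close>
definition ann :: "nat \<Rightarrow> state4 \<Rightarrow> state4" where
  "ann j \<psi> = (\<lambda>k. complex_of_real (sqrt (real (coord j k + 1))) * \<psi> (bump j 1 k))"

definition l2norm :: "state4 \<Rightarrow> real" where
  "l2norm \<psi> = sqrt (infsum (\<lambda>k. (cmod (\<psi> k))\<^sup>2) UNIV)"

definition normalized :: "state4 \<Rightarrow> bool" where
  "normalized \<psi> \<longleftrightarrow> ((\<lambda>k. (cmod (\<psi> k))\<^sup>2) has_sum 1) UNIV"

definition normalize :: "state4 \<Rightarrow> state4" where
  "normalize \<psi> = (\<lambda>k. \<psi> k / complex_of_real (l2norm \<psi>))"

definition inner4 :: "state4 \<Rightarrow> state4 \<Rightarrow> complex" where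
  "inner4 \<phi> \<psi> = infsum (\<lambda>k. cnj (\<phi> k) * \<psi> k) UNIV"

definition depends_only :: "nat set \<Rightarrow> (idx4 \<Rightarrow> complex) \<Rightarrow> bool" where
  "depends_only A f \<longleftrightarrow> (\<forall>k k'. (\<forall>i\<in>A. coord i k = coord i k') \<longrightarrow> f k = f k')"

text \<open>Non-genuinely multimode entangled (normalized) pure states: product across some
bipartition {1,2,3,4} = A \<union> B into two disjoint nonempty sets.\<close>
definition nG :: "state4 set" where
  "nG = {\<phi>. normalized \<phi> \<and>
     (\<exists>A. A \<subseteq> {1..4} \<and> A \<noteq> {} \<and> A \<noteq> {1..4} \<and>
        (\<exists>g h. depends_only A g \<and> depends_only ({1..4} - A) h \<and> (\<forall>k. \<phi> k = g k * h k)))}"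

definition GGM :: "state4 \<Rightarrow> real" where
  "GGM \<psi> = 1 - (SUP \<phi>\<in>nG. (cmod (inner4 \<phi> \<psi>))\<^sup>2)"

definition fmsv :: "real \<Rightarrow> state4" where
  "fmsv s = (\<lambda>k. infsum (\<lambda>(n, r1, r2).
      complex_of_real (1 / cosh s * sqrt (real (n choose r1)) * sqrt (real (n choose r2))
                       * (tanh s / 2) ^ n)
      * ket4 (n - r1, n - r2, r1, r2) k)
    {(n, r1, r2). r1 \<le> n \<and> r2 \<le> n})"

definition psi_sub :: "real \<Rightarrow> nat \<Rightarrow> nat \<Rightarrow> nat \<Rightarrow> nat \<Rightarrow> state4" where
  "psi_sub s j j' mj mj' = normalize ((ann j ^^ mj) ((ann j' ^^ mj') (fmsv s)))"

end

theory Submission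
  imports Defs
begin

definition FV :: "real \<Rightarrow> nat \<Rightarrow> nat \<Rightarrow> nat \<Rightarrow> complex" where
  "FV s n r1 r2 = complex_of_real (1 / cosh s * sqrt (real (n choose r1)) * sqrt (real (n choose r2))
                       * (tanh s / 2) ^ n)"

lemma fmsv_eval:
  "fmsv s (a,b,c,d) = (if a + c = b + d then FV s (a+c) c d else 0)"
proof (cases "a + c = b + d")
  case True
  let ?A = "{(n, r1, r2). r1 \<le> n \<and> r2 \<le> n}"
  have "fmsv s (a,b,c,d) = infsum (\<lambda>x. FV s (a+c) c d) {(a+c,c,d)}"
    unfolding fmsv_def
    apply (rule infsum_cong_neutral)
    using True by (auto simp: ket4_def FV_def split: if_splits)
  then show ?thesis using True by simp
next
  case False
  show ?thesis unfolding fmsv_def using False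
    by (auto intro!: infsum_0 simp: ket4_def)
qed

lemma coord_bump_same: "coord j (bump j m k) = coord j k + m"
  by (cases k) (auto simp: coord_def bump_def)

lemma bump_bump: "bump j m (bump j p k) = bump j (p + m) k"
  by (cases k) (auto simp: bump_def)

lemma ann_pow: "(ann j ^^ m) \<psi> k =
   complex_of_real (sqrt (fact (coord j k + m) / fact (coord j k))) * \<psi> (bump j m k)"
proof (induction m arbitrary: k)
  case 0
  have "bump j 0 k = k" by (cases k) (auto simp: bump_def)
  then show ?case by simp
next
  case (Suc m)
  have "(ann j ^^ Suc m) \<psi> k = ann j ((ann j ^^ m) \<psi>) k" by simp
  also have "\<dots> = complex_of_real (sqrt (real (coord j k + 1))) *
     (complex_of_real (sqrt (fact (coord j k + 1 + m) / fact (coord j k + 1))) * \<psi> (bump j (Suc m) k))"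
    unfolding ann_def Suc.IH coord_bump_same bump_bump by simp
  also have "\<dots> = complex_of_real (sqrt (real (coord j k + 1)) * sqrt (fact (coord j k + 1 + m) / fact (coord j k + 1))) * \<psi> (bump j (Suc m) k)"
    by (simp add: mult.assoc)
  also have "sqrt (real (coord j k + 1)) * sqrt (fact (coord j k + 1 + m) / fact (coord j k + 1))
     = sqrt (fact (coord j k + Suc m) / fact (coord j k))"
  proof -
    have "real (coord j k + 1) * (fact (coord j k + 1 + m) / fact (coord j k + 1))
       = fact (coord j k + Suc m) / fact (coord j k)"
      by (simp add: fact_Suc field_simps del: fact_Suc_0 of_nat_Suc)
    then show ?thesis by (metis real_sqrt_mult)
  qed
  finally show ?case .
qed


lemma key:
  "sqrt (fact (a+p)/fact a) * sqrt (fact (c+q)/fact c) * sqrt (real ((a+p+(c+q)) choose (c+q)))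
   = sqrt (fact (a+p+(c+q)) / (fact a * fact c))"
proof -
  have "real ((a+p+(c+q)) choose (c+q)) = fact (a+p+(c+q)) / (fact (c+q) * fact (a+p))"
    by (subst binomial_fact) auto
  then have "fact (a+p)/fact a * (fact (c+q)/fact c) * real ((a+p+(c+q)) choose (c+q))
     = fact (a+p+(c+q)) / (fact a * fact c)"
    by (simp add: field_simps)
  then show ?thesis by (metis real_sqrt_mult)
qed

definition H13 :: "real \<Rightarrow> nat \<Rightarrow> nat \<Rightarrow> nat \<Rightarrow> nat \<Rightarrow> nat \<Rightarrow> complex" where
  "H13 s M a b c d = (if a+c+M = b+d then complex_of_real (sqrt (fact (a+c+M) / (fact a * fact c))
      * sqrt (real ((a+c+M) choose d)) * (1 / cosh s) * (tanh s / 2) ^ (a+c+M)) else 0)"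

lemma G13:
  assumes "p + q = M"
  shows "complex_of_real (sqrt (fact (a+p)/fact a)) * complex_of_real (sqrt (fact (c+q)/fact c))
     * fmsv s (a+p,b,c+q,d) = H13 s M a b c d"
proof (cases "a+c+M = b+d")
  case True
  have e: "a+p+(c+q) = a+c+M" using assms by simp
  have "complex_of_real (sqrt (fact (a+p)/fact a)) * complex_of_real (sqrt (fact (c+q)/fact c))
     * fmsv s (a+p,b,c+q,d) = complex_of_real ((sqrt (fact (a+p)/fact a) * sqrt (fact (c+q)/fact c)
       * sqrt (real ((a+p+(c+q)) choose (c+q)))) * sqrt (real ((a+p+(c+q)) choose d)) * (1 / cosh s)
       * (tanh s / 2) ^ (a+p+(c+q)))"
    using True e by (simp add: fmsv_eval FV_def ac_simps)
  also have "\<dots> = H13 s M a b c d"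
    unfolding key H13_def using True e by simp
  finally show ?thesis .
next
  case False
  then show ?thesis using assms by (simp add: fmsv_eval H13_def)
qed

definition H24 :: "real \<Rightarrow> nat \<Rightarrow> nat \<Rightarrow> nat \<Rightarrow> nat \<Rightarrow> nat \<Rightarrow> complex" where
  "H24 s M a b c d = (if a+c = b+d+M then complex_of_real (sqrt (fact (b+d+M) / (fact b * fact d))
      * sqrt (real ((b+d+M) choose c)) * (1 / cosh s) * (tanh s / 2) ^ (b+d+M)) else 0)"

lemma G24:
  assumes "p + q = M"
  shows "complex_of_real (sqrt (fact (b+p)/fact b)) * complex_of_real (sqrt (fact (d+q)/fact d))
     * fmsv s (a,b+p,c,d+q) = H24 s M a b c d"
proof (cases "a+c = b+d+M")
  case True
  have e: "b+p+(d+q) = b+d+M" using assms by simp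
  have "complex_of_real (sqrt (fact (b+p)/fact b)) * complex_of_real (sqrt (fact (d+q)/fact d))
     * fmsv s (a,b+p,c,d+q) = complex_of_real ((sqrt (fact (b+p)/fact b) * sqrt (fact (d+q)/fact d)
       * sqrt (real ((b+p+(d+q)) choose (d+q)))) * sqrt (real ((b+p+(d+q)) choose c)) * (1 / cosh s)
       * (tanh s / 2) ^ (b+p+(d+q)))"
    using True e by (simp add: fmsv_eval FV_def ac_simps)
  also have "\<dots> = H24 s M a b c d"
    unfolding key unfolding e H24_def using True by simp
  finally show ?thesis .
next
  case False
  then show ?thesis using assms by (simp add: fmsv_eval H24_def)
qed

lemma state_indep:
  assumes "{j, j'} = {1, 3} \<or> {j, j'} = {2, 4}" and "m1 + m2 = M" and "n1 + n2 = M"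
  shows "(ann j ^^ m1) ((ann j' ^^ m2) (fmsv s)) = (ann j ^^ n1) ((ann j' ^^ n2) (fmsv s))"
proof (rule ext)
  fix k :: idx4
  obtain a b c d where k: "k = (a,b,c,d)" by (cases k) auto
  have cs: "(j = 1 \<and> j' = 3) \<or> (j = 3 \<and> j' = 1) \<or> (j = 2 \<and> j' = 4) \<or> (j = 4 \<and> j' = 2)"
    using assms(1) by (auto simp: doubleton_eq_iff)
  have gen: "p + q = M \<Longrightarrow> (ann j ^^ p) ((ann j' ^^ q) (fmsv s)) k =
     (if {j,j'} = {1,3} then H13 s M a b c d else H24 s M a b c d)" for p q
    using cs
  proof (elim disjE conjE)
    assume "p + q = M" "j = 1" "j' = 3"
    then show ?thesis using G13[of p q M a c s b d]
      by (simp add: k ann_pow coord_def bump_def ac_simps)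
  next
    assume "p + q = M" "j = 3" "j' = 1"
    then show ?thesis using G13[of q p M a c s b d]
      by (simp add: k ann_pow coord_def bump_def ac_simps doubleton_eq_iff)
  next
    assume "p + q = M" "j = 2" "j' = 4"
    then show ?thesis using G24[of p q M b d s a c]
      by (simp add: k ann_pow coord_def bump_def ac_simps doubleton_eq_iff)
  next
    assume "p + q = M" "j = 4" "j' = 2"
    then show ?thesis using G24[of q p M b d s a c]
      by (simp add: k ann_pow coord_def bump_def ac_simps doubleton_eq_iff)
  qed
  show "(ann j ^^ m1) ((ann j' ^^ m2) (fmsv s)) k = (ann j ^^ n1) ((ann j' ^^ n2) (fmsv s)) k"
    using gen[OF assms(2)] gen[OF assms(3)] by simp
qed

theorem theorem2:
  fixes s :: real and j j' M m1 m2 n1 n2 :: nat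
  assumes "s > 0"
    and "{j, j'} = {1, 3} \<or> {j, j'} = {2, 4}"
    and "m1 + m2 = M" and "n1 + n2 = M"
  shows "GGM (psi_sub s j j' m1 m2) = GGM (psi_sub s j j' n1 n2)"
  unfolding psi_sub_def using state_indep[OF assms(2-4)] by simp

end
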